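(* Let $(X,p)$ be a complete partial metric space and $(Y,h)$ a partial metric space, and let $f,g:X\to Y$ be sequentially continuous and consistent. Suppose there are real numbers $r$, $A\ge0$ and $0<c<1$ such that for every $x\in X$ there exists $z\in X$ with $$h(f(z),g(z))-h(f(z),f(z))\le c[h(f(x),g(x))-h(f(x),f(x))],\qquad h(f(z),g(z))-h(g(z),g(z))\le c[h(f(x),g(x))-h(g(x),g(x))],$$ $$r\le p(z,z)\le p(x,z)\le r+A[h(f(x),g(x))-h(f(x),f(x))],\qquad r\le p(z,z)\le p(x,z)\le r+A[h(f(x),g(x))-h(g(x),g(x))]$$ (i.e. $f$ and $g$ are $(f,g)$-mutually $c_r$-contractive). Then $f$ and $g$ have a coincidence point, i.e. there is $a\in X$ with $f(a)=g(a)$.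
   Context: A partial metric on a set $Z$ is $q:Z\times Z\to\mathbb{R}$ with, for all $x,y,z$: $q(x,x)\le q(x,y)$; $q(x,y)=q(y,x)$; $q(x,x)=q(x,y)=q(y,y)$ iff $x=y$; $q(x,y)\le q(x,z)+q(z,y)-q(z,z)$. Each partial metric space carries the topology generated by the balls $\{y\mid q(x,y)-q(x,x)<\epsilon\}$, so $a$ is a limit of $\{x_i\}$ iff for every $\epsilon>0$ there is $N$ with $q(a,x_i)-q(a,a)<\epsilon$ for all $i>N$. $\{x_i\}$ is Cauchy with central distance $r$ if for every $\epsilon>0$ there is $N$ with $|q(x_i,x_j)-r|<\epsilon$ for $i\ge j>N$; a special limit is a limit $a$ with $q(a,a)=r$; the space is complete if every Cauchy sequence has a special limit. $f:X\to Y$ is sequentially continuous if whenever $a$ is a limit of $\{x_i\}$ in $X$, $f(a)$ is a limit of $\{f(x_i)\}$ in $Y$. $f$ is consistent if for all $x,z\in X$, $p(x,x)\le p(z,z)$ implies $h(f(x),f(x))\le h(f(z),f(z))$. *)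

theory Defs
  imports Main "HOL.Real"
begin

definition partial_metric :: "'a set \<Rightarrow> ('a \<Rightarrow> 'a \<Rightarrow> real) \<Rightarrow> bool" where
  "partial_metric Z q \<longleftrightarrow>
     (\<forall>x\<in>Z. \<forall>y\<in>Z. q x x \<le> q x y) \<and>
     (\<forall>x\<in>Z. \<forall>y\<in>Z. q x y = q y x) \<and>
     (\<forall>x\<in>Z. \<forall>y\<in>Z. (q x x = q x y \<and> q x y = q y y) \<longleftrightarrow> x = y) \<and>
     (\<forall>x\<in>Z. \<forall>y\<in>Z. \<forall>z\<in>Z. q x y \<le> q x z + q z y - q z z)"

definition pm_limit :: "('a \<Rightarrow> 'a \<Rightarrow> real) \<Rightarrow> 'a \<Rightarrow> (nat \<Rightarrow> 'a) \<Rightarrow> bool" where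
  "pm_limit q a xs \<longleftrightarrow> (\<forall>\<epsilon>>0. \<exists>N. \<forall>i>N. q a (xs i) - q a a < \<epsilon>)"

definition pm_cauchy :: "('a \<Rightarrow> 'a \<Rightarrow> real) \<Rightarrow> (nat \<Rightarrow> 'a) \<Rightarrow> real \<Rightarrow> bool" where
  "pm_cauchy q xs r \<longleftrightarrow> (\<forall>\<epsilon>>0. \<exists>N. \<forall>i j. i \<ge> j \<and> j > N \<longrightarrow> \<bar>q (xs i) (xs j) - r\<bar> < \<epsilon>)"

definition pm_special_limit :: "('a \<Rightarrow> 'a \<Rightarrow> real) \<Rightarrow> 'a \<Rightarrow> (nat \<Rightarrow> 'a) \<Rightarrow> real \<Rightarrow> bool" where
  "pm_special_limit q a xs r \<longleftrightarrow> pm_limit q a xs \<and> q a a = r"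

definition pm_complete :: "'a set \<Rightarrow> ('a \<Rightarrow> 'a \<Rightarrow> real) \<Rightarrow> bool" where
  "pm_complete Z q \<longleftrightarrow> (\<forall>xs r. (\<forall>i. xs i \<in> Z) \<and> pm_cauchy q xs r \<longrightarrow>
      (\<exists>a\<in>Z. pm_special_limit q a xs r))"

definition seq_continuous ::
  "'a set \<Rightarrow> ('a \<Rightarrow> 'a \<Rightarrow> real) \<Rightarrow> ('b \<Rightarrow> 'b \<Rightarrow> real) \<Rightarrow> ('a \<Rightarrow> 'b) \<Rightarrow> bool" where
  "seq_continuous X p h f \<longleftrightarrow> (\<forall>xs a. (\<forall>i. xs i \<in> X) \<and> a \<in> X \<and> pm_limit p a xs \<longrightarrow>
      pm_limit h (f a) (\<lambda>i. f (xs i)))"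

definition consistent ::
  "'a set \<Rightarrow> ('a \<Rightarrow> 'a \<Rightarrow> real) \<Rightarrow> ('b \<Rightarrow> 'b \<Rightarrow> real) \<Rightarrow> ('a \<Rightarrow> 'b) \<Rightarrow> bool" where
  "consistent X p h f \<longleftrightarrow> (\<forall>x\<in>X. \<forall>z\<in>X. p x x \<le> p z z \<longrightarrow> h (f x) (f x) \<le> h (f z) (f z))"

definition mutually_contractive ::
  "'a set \<Rightarrow> ('a \<Rightarrow> 'a \<Rightarrow> real) \<Rightarrow> ('b \<Rightarrow> 'b \<Rightarrow> real) \<Rightarrow> ('a \<Rightarrow> 'b) \<Rightarrow> ('a \<Rightarrow> 'b)
     \<Rightarrow> real \<Rightarrow> real \<Rightarrow> real \<Rightarrow> bool" where
  "mutually_contractive X p h f g r A c \<longleftrightarrow>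
     (\<forall>x\<in>X. \<exists>z\<in>X.
        h (f z) (g z) - h (f z) (f z) \<le> c * (h (f x) (g x) - h (f x) (f x)) \<and>
        h (f z) (g z) - h (g z) (g z) \<le> c * (h (f x) (g x) - h (g x) (g x)) \<and>
        r \<le> p z z \<and> p z z \<le> p x z \<and> p x z \<le> r + A * (h (f x) (g x) - h (f x) (f x)) \<and>
        p x z \<le> r + A * (h (f x) (g x) - h (g x) (g x)))"

end

theory Submission
  imports Defs
begin

lemma geo_small:
  fixes B c :: real
  assumes "B \<ge> 0" "0 < c" "c < 1" "e > 0"
  shows "\<exists>N. \<forall>n\<ge>N. B * c ^ n < e"
proof -
  obtain N where N: "c ^ N < e / (B + 1)"
    using real_arch_pow_inv[of "e/(B+1)" c] assms by auto
  have "\<forall>n\<ge>N. B * c ^ n < e"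
  proof (intro allI impI)
    fix n assume "n \<ge> N"
    then have "c ^ n \<le> c ^ N" using assms by (simp add: power_decreasing)
    then have "B * c ^ n \<le> (B+1) * c ^ N" using assms
      by (meson add_increasing2 less_eq_real_def mult_mono zero_le_one zero_le_power)
    also have "\<dots> < (B+1) * (e/(B+1))" using N assms by (intro mult_strict_left_mono) auto
    also have "\<dots> = e" using assms by simp
    finally show "B * c ^ n < e" .
  qed
  then show ?thesis by blast
qed

theorem theorem7p11:
  fixes X :: "'a set" and p :: "'a \<Rightarrow> 'a \<Rightarrow> real"
    and Y :: "'b set" and h :: "'b \<Rightarrow> 'b \<Rightarrow> real"
    and f g :: "'a \<Rightarrow> 'b" and r A c :: real
  assumes "X \<noteq> {}" and "partial_metric X p" and "pm_complete X p"
    and "partial_metric Y h"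
    and "f ` X \<subseteq> Y" and "g ` X \<subseteq> Y"
    and "seq_continuous X p h f" and "seq_continuous X p h g"
    and "consistent X p h f" and "consistent X p h g"
    and "A \<ge> 0" and "0 < c" and "c < 1"
    and "mutually_contractive X p h f g r A c"
  shows "\<exists>a\<in>X. f a = g a"
proof -
  note pX = assms(2)[unfolded partial_metric_def]
  note hY = assms(4)[unfolded partial_metric_def]
  have p1: "\<And>x y. x \<in> X \<Longrightarrow> y \<in> X \<Longrightarrow> p x x \<le> p x y" using pX by blast
  have p2: "\<And>x y. x \<in> X \<Longrightarrow> y \<in> X \<Longrightarrow> p x y = p y x" using pX by blast
  have p4: "\<And>x y z. x \<in> X \<Longrightarrow> y \<in> X \<Longrightarrow> z \<in> X \<Longrightarrow> p x y \<le> p x z + p z y - p z z"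
    using pX by blast
  have h1: "\<And>x y. x \<in> Y \<Longrightarrow> y \<in> Y \<Longrightarrow> h x x \<le> h x y" using hY by blast
  have h2: "\<And>x y. x \<in> Y \<Longrightarrow> y \<in> Y \<Longrightarrow> h x y = h y x" using hY by blast
  have h3: "\<And>x y. x \<in> Y \<Longrightarrow> y \<in> Y \<Longrightarrow> h x x = h x y \<Longrightarrow> h x y = h y y \<Longrightarrow> x = y"
    using hY by blast
  have h4: "\<And>x y z. x \<in> Y \<Longrightarrow> y \<in> Y \<Longrightarrow> z \<in> Y \<Longrightarrow> h x y \<le> h x z + h z y - h z z"
    using hY by blast
  have fY: "\<And>x. x \<in> X \<Longrightarrow> f x \<in> Y" and gY: "\<And>x. x \<in> X \<Longrightarrow> g x \<in> Y"
    using assms(5,6) by auto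
  define Df where "Df x = h (f x) (g x) - h (f x) (f x)" for x
  define Dg where "Dg x = h (f x) (g x) - h (g x) (g x)" for x
  have Dfnn: "\<And>x. x \<in> X \<Longrightarrow> Df x \<ge> 0" unfolding Df_def using h1 fY gY by fastforce
  have Dgnn: "\<And>x. x \<in> X \<Longrightarrow> Dg x \<ge> 0" unfolding Dg_def using h1[OF gY fY] h2[OF fY gY] by (metis diff_ge_0_iff_ge)
  have "\<forall>x\<in>X. \<exists>z. z \<in> X \<and> Df z \<le> c * Df x \<and> Dg z \<le> c * Dg x \<and>
        r \<le> p z z \<and> p z z \<le> p x z \<and> p x z \<le> r + A * Df x"
    using assms(14) unfolding mutually_contractive_def Df_def Dg_def by blast
  then obtain z where z: "\<And>x. x \<in> X \<Longrightarrow> z x \<in> X \<and> Df (z x) \<le> c * Df x \<and> Dg (z x) \<le> c * Dg x \<and>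
        r \<le> p (z x) (z x) \<and> p (z x) (z x) \<le> p x (z x) \<and> p x (z x) \<le> r + A * Df x"
    by metis
  obtain x0 where x0: "x0 \<in> X" using assms(1) by blast
  define xs where "xs n = (z ^^ n) x0" for n
  have xsS: "xs (Suc n) = z (xs n)" for n unfolding xs_def by simp
  have xsX: "xs n \<in> X" for n
    by (induction n) (auto simp: xsS z x0 xs_def[of 0])
  have zs: "Df (xs (Suc n)) \<le> c * Df (xs n) \<and> Dg (xs (Suc n)) \<le> c * Dg (xs n) \<and>
        r \<le> p (xs (Suc n)) (xs (Suc n)) \<and> p (xs (Suc n)) (xs (Suc n)) \<le> p (xs n) (xs (Suc n)) \<and>
        p (xs n) (xs (Suc n)) \<le> r + A * Df (xs n)" for n
    using z[OF xsX[of n]] xsS by simp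
  define D where "D = Df x0"
  define E where "E = Dg x0"
  have x00: "xs 0 = x0" unfolding xs_def by simp
  have DfN: "Df (xs n) \<le> c ^ n * D" for n
  proof (induction n)
    case 0 then show ?case by (simp add: x00 D_def)
  next
    case (Suc n)
    have "Df (xs (Suc n)) \<le> c * Df (xs n)" using zs by blast
    also have "\<dots> \<le> c * (c ^ n * D)" using Suc assms(12) by (simp add: mult_left_mono)
    finally show ?case by simp
  qed
  have DgN: "Dg (xs n) \<le> c ^ n * E" for n
  proof (induction n)
    case 0 then show ?case by (simp add: x00 E_def)
  next
    case (Suc n)
    have "Dg (xs (Suc n)) \<le> c * Dg (xs n)" using zs by blast
    also have "\<dots> \<le> c * (c ^ n * E)" using Suc assms(12) by (simp add: mult_left_mono)
    finally show ?case by simp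
  qed
  have D0: "D \<ge> 0" unfolding D_def using Dfnn x0 by blast
  have E0: "E \<ge> 0" unfolding E_def using Dgnn x0 by blast
  define K where "K = A * D"
  have K0: "K \<ge> 0" unfolding K_def using D0 assms(11) by simp
  have gap: "p (xs n) (xs (Suc n)) \<le> r + K * c ^ n" for n
  proof -
    have "A * Df (xs n) \<le> A * (c ^ n * D)" using DfN assms(11) by (simp add: mult_left_mono)
    then show ?thesis using zs[of n] unfolding K_def by (simp add: mult_ac)
  qed
  have c1: "1 - c > 0" using assms(13) by simp
  have chain: "p (xs (Suc j)) (xs (Suc j + k)) \<le> p (xs (Suc j)) (xs (Suc j)) + K * (c ^ Suc j - c ^ (Suc j + k)) / (1 - c)" for j k
  proof (induction k)
    case 0 then show ?case by simp
  next
    case (Suc k)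
    have "p (xs (Suc j)) (xs (Suc j + Suc k)) \<le> p (xs (Suc j)) (xs (Suc j+k)) + p (xs (Suc j+k)) (xs (Suc (Suc j+k))) - p (xs (Suc j+k)) (xs (Suc j+k))"
      using p4[OF xsX xsX xsX] by simp
    also have "\<dots> \<le> p (xs (Suc j)) (xs (Suc j)) + K * (c ^ Suc j - c ^ (Suc j + k)) / (1 - c) + K * c ^ (Suc j+k)"
      using Suc gap[of "Suc j+k"] zs[of "j + k"] by simp
    also have "\<dots> = p (xs (Suc j)) (xs (Suc j)) + K * (c ^ Suc j - c ^ (Suc j + Suc k)) / (1 - c)"
      using c1 by (simp add: field_simps)
    finally show ?case .
  qed
  define M where "M = K + K / (1 - c)"
  have M0: "M \<ge> 0" unfolding M_def using K0 c1 by simp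
  have ub: "p (xs (Suc m)) (xs (Suc m + k)) \<le> r + M * c ^ m" for m k
  proof -
    have a: "K * (c ^ Suc m - c ^ (Suc m + k)) / (1 - c) \<le> K * c ^ m / (1 - c)"
    proof (rule divide_right_mono)
      have "c ^ Suc m - c ^ (Suc m + k) \<le> c ^ m"
      proof -
        have "c ^ Suc m \<le> c ^ m" using assms(12,13) by (intro power_decreasing) auto
        moreover have "c ^ (Suc m + k) \<ge> 0" using assms(12) by simp
        ultimately show ?thesis by linarith
      qed
      then show "K * (c ^ Suc m - c ^ (Suc m + k)) \<le> K * c ^ m" using K0 by (rule mult_left_mono)
    qed (use c1 in simp)
    have b: "p (xs (Suc m)) (xs (Suc m)) \<le> r + K * c ^ m" using zs[of m] gap[of m] by linarith
    have "M * c ^ m = K * c ^ m + K * c ^ m / (1 - c)" unfolding M_def by (simp add: algebra_simps)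
    then show ?thesis using chain[of m k] a b by linarith
  qed
  have cauchy: "pm_cauchy p xs r"
    unfolding pm_cauchy_def
  proof (intro allI impI)
    fix e :: real assume e: "e > 0"
    obtain N where N: "\<forall>n\<ge>N. M * c ^ n < e" using geo_small[OF M0 assms(12,13) e] by blast
    have "\<forall>i j. i \<ge> j \<and> j > N \<longrightarrow> \<bar>p (xs i) (xs j) - r\<bar> < e"
    proof (intro allI impI)
      fix i j assume ij: "i \<ge> j \<and> j > N"
      then obtain m k where m: "j = Suc m" "i = Suc m + k" "m \<ge> N"
        by (metis Suc_pred le_Suc_ex less_Suc_eq_le not_less_zero gr0I)
      have u: "p (xs j) (xs i) \<le> r + M * c ^ m" using ub[of m k] m by simp
      have l1: "r \<le> p (xs j) (xs j)" using zs[of m] m by simp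
      have l2: "p (xs j) (xs j) \<le> p (xs j) (xs i)" using p1 xsX by blast
      have sy: "p (xs i) (xs j) = p (xs j) (xs i)" using p2 xsX by blast
      show "\<bar>p (xs i) (xs j) - r\<bar> < e" using u l1 l2 sy N m(3) by fastforce
    qed
    then show "\<exists>N. \<forall>i j. i \<ge> j \<and> j > N \<longrightarrow> \<bar>p (xs i) (xs j) - r\<bar> < e" by blast
  qed
  obtain a where aX: "a \<in> X" and alim: "pm_limit p a xs" and aa: "p a a = r"
    using assms(3) cauchy xsX unfolding pm_complete_def pm_special_limit_def by blast
  have LF: "pm_limit h (f a) (\<lambda>i. f (xs i))" using assms(7) aX alim xsX unfolding seq_continuous_def by blast
  have LG: "pm_limit h (g a) (\<lambda>i. g (xs i))" using assms(8) aX alim xsX unfolding seq_continuous_def by blast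
  have key: "h (f a) (g a) \<le> h (f a) (f a) + e \<and> h (f a) (g a) \<le> h (g a) (g a) + e" if e: "e > 0" for e
  proof -
    have e3: "e/3 > 0" using e by simp
    obtain N1 where N1: "\<forall>i>N1. h (f a) (f (xs i)) - h (f a) (f a) < e/3"
      using LF e3 unfolding pm_limit_def by blast
    obtain N2 where N2: "\<forall>i>N2. h (g a) (g (xs i)) - h (g a) (g a) < e/3"
      using LG e3 unfolding pm_limit_def by blast
    obtain N3 where N3: "\<forall>n\<ge>N3. D * c ^ n < e/3" using geo_small[OF D0 assms(12,13) e3] by blast
    obtain N4 where N4: "\<forall>n\<ge>N4. E * c ^ n < e/3" using geo_small[OF E0 assms(12,13) e3] by blast
    define n where "n = Suc (N1 + N2 + N3 + N4)"
    define x where "x = xs n"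
    have xX: "x \<in> X" unfolding x_def by (rule xsX)
    have t1: "h (f a) (f x) - h (f a) (f a) < e/3" using N1 unfolding n_def x_def by simp
    have t2: "h (g a) (g x) - h (g a) (g a) < e/3" using N2 unfolding n_def x_def by simp
    have t3: "Df x < e/3" proof -
      have "n \<ge> N3" unfolding n_def by simp
      then have "D * c ^ n < e/3" using N3 by blast
      then show ?thesis using DfN[of n] unfolding x_def by (simp add: mult.commute)
    qed
    have t4: "Dg x < e/3" proof -
      have "n \<ge> N4" unfolding n_def by simp
      then have "E * c ^ n < e/3" using N4 by blast
      then show ?thesis using DgN[of n] unfolding x_def by (simp add: mult.commute)
    qed
    have rx: "r \<le> p x x" using zs[of "N1 + N2 + N3 + N4"] unfolding x_def n_def by simp
    have cf: "h (f a) (f a) \<le> h (f x) (f x)" using assms(9) aX xX rx aa unfolding consistent_def by simp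
    have cg: "h (g a) (g a) \<le> h (g x) (g x)" using assms(10) aX xX rx aa unfolding consistent_def by simp
    have tr1: "h (f a) (g a) \<le> h (f a) (f x) + h (f x) (g a) - h (f x) (f x)"
      using h4 fY gY aX xX by blast
    have tr2: "h (f x) (g a) \<le> h (f x) (g x) + h (g x) (g a) - h (g x) (g x)"
      using h4 fY gY aX xX by blast
    have sy: "h (g x) (g a) = h (g a) (g x)" using h2 gY aX xX by blast
    show ?thesis using t1 t2 t3 t4 cf cg tr1 tr2 sy unfolding Df_def Dg_def by linarith
  qed
  have e1: "h (f a) (g a) \<le> h (f a) (f a)"
    by (rule field_le_epsilon) (use key in auto)
  have e2: "h (f a) (g a) \<le> h (g a) (g a)"
    by (rule field_le_epsilon) (use key in auto)
  have q1: "h (f a) (f a) \<le> h (f a) (g a)" using h1 fY gY aX by blast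
  have q2: "h (g a) (g a) \<le> h (f a) (g a)" using h1 h2 fY gY aX by metis
  have "f a = g a" using h3[OF fY[OF aX] gY[OF aX]] e1 e2 q1 q2 by linarith
  then show ?thesis using aX by blast
qed

end
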